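(* Let $\Gamma$ be a connected $(Y,Y')$-bipartite distance-regularized graph. Let $D$ denote the (common) eccentricity of the vertices of $Y$, and let $c'_2=c_2(w)$ for $w\in Y'$. The following are equivalent: (i) $\Gamma$ is $2$-$Y$-homogeneous with $D=4$ and $c'_2=1$; (ii) $\Gamma$ is isomorphic to the subdivision graph of a complete bipartite graph $K_{n,n}=(X,\mathcal{R})$ with $n\ge 2$, via an isomorphism mapping $Y$ onto $X$.
   Context: Graphs are finite, simple, undirected. For vertices $u,w$ of a connected graph, $\partial(u,w)$ is the distance, $\Gamma_i(u)$ the set of vertices at distance $i$ from $u$, $\Gamma(u)=\Gamma_1(u)$, $\varepsilon(u)$ the eccentricity of $u$. For $w\in\Gamma_i(u)$ put $a_i(u,w)=|\Gamma_i(u)\cap\Gamma(w)|$, $b_i(u,w)=|\Gamma_{i+1}(u)\cap\Gamma(w)|$, $c_i(u,w)=|\Gamma_{i-1}(u)\cap\Gamma(w)|$. A vertex $u$ is distance-regularized if for each $0\le i\le\varepsilon(u)$ these numbers do not depend on $w\in\Gamma_i(u)$ (they are then written $c_i(u)$ etc.); a connected graph is distance-regularized if all vertices are. $(Y,Y')$-bipartite means the vertex set is the disjoint union of $Y,Y'$ with every edge joining $Y$ to $Y'$; in a bipartite distance-regularized graph all vertices of $Y$ have the same eccentricity and intersection numbers, and likewise for $Y'$. For a $(Y,Y')$-bipartite graph in which every vertex of $Y$ has eccentricity $D\ge3$: it is $2$-$Y$-homogeneous if for each $i$ with $1\le i\le D-1$ the number $|\Gamma(x)\cap\Gamma(y)\cap\Gamma_{i-1}(z)|$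 is the same for all $x\in Y$, $y\in\Gamma_2(x)$, $z\in\Gamma_i(x)\cap\Gamma_i(y)$. The subdivision graph of a graph is obtained by replacing each edge $uv$ by a path $u,w_{uv},v$ through a new vertex $w_{uv}$. *)

theory Defs
  imports Main
begin

definition graph :: "'a set \<Rightarrow> ('a \<Rightarrow> 'a \<Rightarrow> bool) \<Rightarrow> bool" where
  "graph V E \<longleftrightarrow> finite V \<and> (\<forall>x y. E x y \<longrightarrow> x \<in> V \<and> y \<in> V \<and> E y x \<and> x \<noteq> y)"

inductive walk :: "('a \<Rightarrow> 'a \<Rightarrow> bool) \<Rightarrow> 'a \<Rightarrow> 'a \<Rightarrow> nat \<Rightarrow> bool" for E where
  walk0: "walk E u u 0"
| walkS: "E u v \<Longrightarrow> walk E v w k \<Longrightarrow> walk E u w (Suc k)"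

definition connected_graph :: "'a set \<Rightarrow> ('a \<Rightarrow> 'a \<Rightarrow> bool) \<Rightarrow> bool" where
  "connected_graph V E \<longleftrightarrow> graph V E \<and> V \<noteq> {} \<and> (\<forall>u\<in>V. \<forall>w\<in>V. \<exists>k. walk E u w k)"

definition gdist :: "('a \<Rightarrow> 'a \<Rightarrow> bool) \<Rightarrow> 'a \<Rightarrow> 'a \<Rightarrow> nat" where
  "gdist E u w = (LEAST k. walk E u w k)"

definition sphere :: "'a set \<Rightarrow> ('a \<Rightarrow> 'a \<Rightarrow> bool) \<Rightarrow> 'a \<Rightarrow> nat \<Rightarrow> 'a set" where
  "sphere V E u i = {w \<in> V. gdist E u w = i}"

definition nbhd :: "'a set \<Rightarrow> ('a \<Rightarrow> 'a \<Rightarrow> bool) \<Rightarrow> 'a \<Rightarrow> 'a set" where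
  "nbhd V E u = {w \<in> V. E u w}"

definition ecc :: "'a set \<Rightarrow> ('a \<Rightarrow> 'a \<Rightarrow> bool) \<Rightarrow> 'a \<Rightarrow> nat" where
  "ecc V E u = Max (gdist E u ` V)"

definition a_num :: "'a set \<Rightarrow> ('a \<Rightarrow> 'a \<Rightarrow> bool) \<Rightarrow> nat \<Rightarrow> 'a \<Rightarrow> 'a \<Rightarrow> nat" where
  "a_num V E i u w = card (sphere V E u i \<inter> nbhd V E w)"

definition b_num :: "'a set \<Rightarrow> ('a \<Rightarrow> 'a \<Rightarrow> bool) \<Rightarrow> nat \<Rightarrow> 'a \<Rightarrow> 'a \<Rightarrow> nat" where
  "b_num V E i u w = card (sphere V E u (Suc i) \<inter> nbhd V E w)"

text \<open>c_i(u,w) = |\<Gamma>_{i-1}(u) \<inter> \<Gamma>(w)|; for i = 0 this is 0 (\<Gamma>_{-1} is empty).\<close>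
definition c_num :: "'a set \<Rightarrow> ('a \<Rightarrow> 'a \<Rightarrow> bool) \<Rightarrow> nat \<Rightarrow> 'a \<Rightarrow> 'a \<Rightarrow> nat" where
  "c_num V E i u w = (if i = 0 then 0 else card (sphere V E u (i - 1) \<inter> nbhd V E w))"

definition dist_regularized_vertex :: "'a set \<Rightarrow> ('a \<Rightarrow> 'a \<Rightarrow> bool) \<Rightarrow> 'a \<Rightarrow> bool" where
  "dist_regularized_vertex V E u \<longleftrightarrow>
     (\<forall>i \<le> ecc V E u. \<forall>w \<in> sphere V E u i. \<forall>w' \<in> sphere V E u i.
        a_num V E i u w = a_num V E i u w' \<and> b_num V E i u w = b_num V E i u w'
        \<and> c_num V E i u w = c_num V E i u w')"

definition dist_regularized_graph :: "'a set \<Rightarrow> ('a \<Rightarrow> 'a \<Rightarrow> bool) \<Rightarrow> bool" where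
  "dist_regularized_graph V E \<longleftrightarrow> connected_graph V E \<and> (\<forall>u\<in>V. dist_regularized_vertex V E u)"

definition bipartite_YY :: "'a set \<Rightarrow> ('a \<Rightarrow> 'a \<Rightarrow> bool) \<Rightarrow> 'a set \<Rightarrow> 'a set \<Rightarrow> bool" where
  "bipartite_YY V E Y Y' \<longleftrightarrow> Y \<union> Y' = V \<and> Y \<inter> Y' = {} \<and>
     (\<forall>x y. E x y \<longrightarrow> (x \<in> Y \<and> y \<in> Y') \<or> (x \<in> Y' \<and> y \<in> Y))"

definition two_Y_homogeneous :: "'a set \<Rightarrow> ('a \<Rightarrow> 'a \<Rightarrow> bool) \<Rightarrow> 'a set \<Rightarrow> 'a set \<Rightarrow> nat \<Rightarrow> bool" where
  "two_Y_homogeneous V E Y Y' D \<longleftrightarrow> bipartite_YY V E Y Y' \<and> 3 \<le> D \<and> (\<forall>x\<in>Y. ecc V E x = D) \<and>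
     (\<forall>i. 1 \<le> i \<and> i \<le> D - 1 \<longrightarrow>
        (\<exists>g. \<forall>x\<in>Y. \<forall>y\<in>sphere V E x 2. \<forall>z\<in>sphere V E x i \<inter> sphere V E y i.
           card (nbhd V E x \<inter> nbhd V E y \<inter> sphere V E z (i - 1)) = g))"

text \<open>Subdivision graph of (V,E): original vertices Inl v, and a new vertex Inr {u,v} for each edge uv.\<close>
definition subdiv_V :: "'b set \<Rightarrow> ('b \<Rightarrow> 'b \<Rightarrow> bool) \<Rightarrow> ('b + 'b set) set" where
  "subdiv_V V E = Inl ` V \<union> {Inr {u, v} | u v. E u v}"

definition subdiv_E :: "('b \<Rightarrow> 'b \<Rightarrow> bool) \<Rightarrow> ('b + 'b set) \<Rightarrow> ('b + 'b set) \<Rightarrow> bool" where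
  "subdiv_E E p q \<longleftrightarrow> (\<exists>u v. E u v \<and> ((p = Inl u \<and> q = Inr {u, v}) \<or> (p = Inr {u, v} \<and> q = Inl u)))"

definition Knn_V :: "nat \<Rightarrow> nat set" where
  "Knn_V n = {0..<2*n}"

definition Knn_E :: "nat \<Rightarrow> nat \<Rightarrow> nat \<Rightarrow> bool" where
  "Knn_E n a b \<longleftrightarrow> (a < n \<and> n \<le> b \<and> b < 2*n) \<or> (b < n \<and> n \<le> a \<and> a < 2*n)"

end

theory Submission
  imports Defs
begin

lemma walk_snoc: "walk E u v k \<Longrightarrow> E v w \<Longrightarrow> walk E u w (Suc k)"
  by (induction rule: walk.induct) (auto intro: walk.intros)

lemma walk_last: "walk E u w (Suc k) \<Longrightarrow> \<exists>v. walk E u v k \<and> E v w"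
proof (induction k arbitrary: u)
  case 0
  then show ?case by (auto elim!: walk.cases intro: walk.intros)
next
  case (Suc k)
  from Suc.prems obtain v where "E u v" "walk E v w (Suc k)" by (auto elim: walk.cases)
  with Suc.IH obtain x where "walk E v x k" "E x w" by blast
  then show ?case using \<open>E u v\<close> by (auto intro: walk.intros)
qed

locale bg =
  fixes V :: "'a set" and E :: "'a \<Rightarrow> 'a \<Rightarrow> bool" and Y Y' :: "'a set"
  assumes cg: "connected_graph V E" and bip: "bipartite_YY V E Y Y'"
begin

lemma finV: "finite V" using cg by (simp add: connected_graph_def graph_def)
lemma Ein: "E x y \<Longrightarrow> x \<in> V \<and> y \<in> V" using cg by (simp add: connected_graph_def graph_def)
lemma Esym: "E x y \<Longrightarrow> E y x" using cg by (simp add: connected_graph_def graph_def)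
lemma Eirr: "E x y \<Longrightarrow> x \<noteq> y" using cg by (simp add: connected_graph_def graph_def)
lemma conn: "u \<in> V \<Longrightarrow> w \<in> V \<Longrightarrow> \<exists>k. walk E u w k" using cg by (simp add: connected_graph_def)
lemma VY: "V = Y \<union> Y'" and YY: "Y \<inter> Y' = {}" and EYY: "E x y \<Longrightarrow> (x \<in> Y \<and> y \<in> Y') \<or> (x \<in> Y' \<and> y \<in> Y)"
  using bip by (auto simp: bipartite_YY_def)

lemma walk_rev: "walk E u w k \<Longrightarrow> walk E w u k"
  by (induction rule: walk.induct) (auto intro: walk.intros walk_snoc Esym)

lemma walk_V: "walk E u w k \<Longrightarrow> u \<in> V \<Longrightarrow> w \<in> V"
  by (induction rule: walk.induct) (auto dest: Ein)

lemma walk_par: "walk E u w k \<Longrightarrow> u \<in> V \<Longrightarrow> ((u \<in> Y) = (w \<in> Y)) = even k"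
proof (induction rule: walk.induct)
  case (walk0 u) then show ?case by simp
next
  case (walkS u v w k)
  have "v \<in> V" using Ein walkS by blast
  then have "((v \<in> Y) = (w \<in> Y)) = even k" using walkS by blast
  moreover have "(u \<in> Y) = (v \<notin> Y)" using EYY[OF walkS(1)] YY by auto
  ultimately show ?case by auto
qed

abbreviation d where "d \<equiv> gdist E"

lemma d_le: "walk E u w k \<Longrightarrow> d u w \<le> k"
  unfolding gdist_def by (rule Least_le)

lemma d_walk: "u \<in> V \<Longrightarrow> w \<in> V \<Longrightarrow> walk E u w (d u w)"
  unfolding gdist_def using conn by (metis LeastI)

lemma d_sym: "u \<in> V \<Longrightarrow> w \<in> V \<Longrightarrow> d u w = d w u"
  by (meson antisym d_le d_walk walk_rev)

lemma d_self: "d u u = 0"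
  using d_le[OF walk0] by simp

lemma d0: "u \<in> V \<Longrightarrow> w \<in> V \<Longrightarrow> d u w = 0 \<longleftrightarrow> u = w"
  using d_walk[of u w] by (auto simp: d_self elim: walk.cases)

lemma d1: "u \<in> V \<Longrightarrow> w \<in> V \<Longrightarrow> d u w = 1 \<longleftrightarrow> E u w"
proof
  assume "u \<in> V" "w \<in> V" "d u w = 1"
  then have "walk E u w 1" using d_walk by fastforce
  then show "E u w" by (auto elim!: walk.cases)
next
  assume "u \<in> V" "w \<in> V" "E u w"
  then have "d u w \<le> 1" using d_le walk.intros by (metis One_nat_def)
  moreover have "d u w \<noteq> 0" using d0 Eirr \<open>E u w\<close> \<open>u \<in> V\<close> \<open>w \<in> V\<close> by blast
  ultimately show "d u w = 1" by simp
qed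

lemma d_par: "u \<in> V \<Longrightarrow> w \<in> V \<Longrightarrow> ((u \<in> Y) = (w \<in> Y)) = even (d u w)"
  using walk_par d_walk by blast

lemma d_pred: "u \<in> V \<Longrightarrow> w \<in> V \<Longrightarrow> d u w = Suc k \<Longrightarrow> \<exists>v\<in>V. E v w \<and> d u v = k"
proof -
  assume a: "u \<in> V" "w \<in> V" "d u w = Suc k"
  then obtain v where v: "walk E u v k" "E v w" using d_walk walk_last by metis
  have "v \<in> V" using Ein v by blast
  have "d u v \<le> k" using d_le v by blast
  moreover have "d u w \<le> Suc (d u v)" using d_le walk_snoc d_walk a \<open>v \<in> V\<close> v by metis
  ultimately show ?thesis using a v \<open>v \<in> V\<close> by force
qed

lemma d_step: "u \<in> V \<Longrightarrow> v \<in> V \<Longrightarrow> E v w \<Longrightarrow> d u w \<le> Suc (d u v)"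
  using d_le walk_snoc d_walk by metis

lemma d2: "u \<in> V \<Longrightarrow> E u v \<Longrightarrow> E v w \<Longrightarrow> d u w \<le> 2"
  using d_le walk.intros by (metis numeral_2_eq_2 One_nat_def)

lemma d3: "E u v \<Longrightarrow> E v w \<Longrightarrow> E w x \<Longrightarrow> d u x \<le> 3"
proof -
  assume "E u v" "E v w" "E w x"
  then have "walk E u x 3" by (metis walk.intros numeral_3_eq_3 numeral_2_eq_2 One_nat_def)
  then show ?thesis by (rule d_le)
qed

lemma d4: "E u v \<Longrightarrow> E v w \<Longrightarrow> E w x \<Longrightarrow> E x y \<Longrightarrow> d u y \<le> 4"
proof -
  assume "E u v" "E v w" "E w x" "E x y"
  then have "walk E u y (Suc (Suc (Suc (Suc 0))))" by (metis walk.intros)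
  then show ?thesis using d_le by fastforce
qed

lemma sphere_iff: "w \<in> sphere V E u i \<longleftrightarrow> w \<in> V \<and> d u w = i"
  by (simp add: sphere_def)

lemma nbhd_iff: "w \<in> nbhd V E u \<longleftrightarrow> E u w"
  using Ein by (auto simp: nbhd_def)

lemma sphere1: "u \<in> V \<Longrightarrow> sphere V E u 1 = nbhd V E u"
  using d1 Ein by (auto simp: sphere_iff nbhd_iff)

lemma sphere0: "u \<in> V \<Longrightarrow> sphere V E u 0 = {u}"
  using d0 by (auto simp: sphere_iff)

lemma ecc_ge: "w \<in> V \<Longrightarrow> d u w \<le> ecc V E u"
  unfolding ecc_def using finV by auto

lemma ecc_ex: "\<exists>w\<in>V. d u w = ecc V E u"
proof -
  have "V \<noteq> {}" using cg by (simp add: connected_graph_def)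
  then have "ecc V E u \<in> gdist E u ` V" unfolding ecc_def using finV by (intro Max_in) auto
  then show ?thesis by auto
qed

lemma finite_nb: "finite (nbhd V E u)" using finV by (simp add: nbhd_def)
lemma finite_sph: "finite (sphere V E u i)" using finV by (simp add: sphere_def)

end

lemma card_ex_notin: "finite A \<Longrightarrow> finite B \<Longrightarrow> card B < card A \<Longrightarrow> \<exists>y\<in>A. y \<notin> B"
  by (meson card_mono subsetI leD)

context bg
begin

lemma YV: "x \<in> Y \<Longrightarrow> x \<in> V" using VY by auto
lemma Y'V: "x \<in> Y' \<Longrightarrow> x \<in> V" using VY by auto
lemma EY: "E x y \<Longrightarrow> x \<in> Y \<Longrightarrow> y \<in> Y'" using EYY YY by blast
lemma EY': "E x y \<Longrightarrow> x \<in> Y' \<Longrightarrow> y \<in> Y" using EYY YY by blast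
lemma notEYY: "x \<in> Y \<Longrightarrow> y \<in> Y \<Longrightarrow> \<not> E x y" using EYY YY by blast
lemma notEY'Y': "x \<in> Y' \<Longrightarrow> y \<in> Y' \<Longrightarrow> \<not> E x y" using EYY YY by blast

lemma two_pts: "x \<noteq> y \<Longrightarrow> E x w \<Longrightarrow> E y w \<Longrightarrow> d x y = 2"
proof -
  assume a: "x \<noteq> y" "E x w" "E y w"
  have V: "x \<in> V" "y \<in> V" using Ein a by auto
  have "d x y \<le> 2" using d2 a Esym V by blast
  moreover have "d x y \<noteq> 0" using d0 V a by blast
  moreover have "\<not> E x y" using EYY a YY by blast
  then have "d x y \<noteq> 1" using d1 V by blast
  ultimately show ?thesis by linarith
qed

lemma d2_common: "x \<in> V \<Longrightarrow> y \<in> V \<Longrightarrow> d x y = 2 \<Longrightarrow> \<exists>w\<in>V. E x w \<and> E w y"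
proof -
  assume a: "x \<in> V" "y \<in> V" "d x y = 2"
  then obtain v where v: "v \<in> V" "E v y" "d x v = 1" using d_pred[of x y 1] by auto
  then show ?thesis using d1 a by blast
qed

end

locale bgi = bg +
  assumes DR: "\<forall>u\<in>V. dist_regularized_vertex V E u"
  and ecc4: "\<forall>x\<in>Y. ecc V E x = 4"
  and Yne: "Y \<noteq> {}"
  and g2: "\<exists>g. \<forall>x\<in>Y. \<forall>y\<in>sphere V E x 2. \<forall>z\<in>sphere V E x 2 \<inter> sphere V E y 2.
           card (nbhd V E x \<inter> nbhd V E y \<inter> sphere V E z 1) = g"
  and g3: "\<exists>g. \<forall>x\<in>Y. \<forall>y\<in>sphere V E x 2. \<forall>z\<in>sphere V E x 3 \<inter> sphere V E y 3.
           card (nbhd V E x \<inter> nbhd V E y \<inter> sphere V E z 2) = g"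
  and c2: "\<forall>w\<in>Y'. \<forall>z\<in>sphere V E w 2. c_num V E 2 w z = 1"
begin

abbreviation nb where "nb \<equiv> nbhd V E"

lemma uniq: "w1 \<in> Y' \<Longrightarrow> a \<noteq> b \<Longrightarrow> E a w1 \<Longrightarrow> E b w1 \<Longrightarrow> E a w2 \<Longrightarrow> E b w2 \<Longrightarrow> w1 = w2"
proof (rule ccontr)
  assume a: "w1 \<in> Y'" "a \<noteq> b" "E a w1" "E b w1" "E a w2" "E b w2" "w1 \<noteq> w2"
  have V: "w1 \<in> V" "w2 \<in> V" using Ein a by auto
  have "d w1 w2 = 2" using two_pts[of w1 w2 a] a Esym by blast
  then have "c_num V E 2 w1 w2 = 1" using c2 a V by (auto simp: sphere_iff)
  then have "card (sphere V E w1 1 \<inter> nb w2) = 1" by (simp add: c_num_def)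
  then have "card (nb w1 \<inter> nb w2) = 1" unfolding sphere1[OF V(1)] .
  moreover have "{a, b} \<subseteq> nb w1 \<inter> nb w2" using a Esym by (auto simp: nbhd_iff)
  moreover have "finite (nb w1 \<inter> nb w2)" using finite_nb by blast
  ultimately show False using a card_mono[of "nb w1 \<inter> nb w2" "{a,b}"] by auto
qed

lemma within4: "x \<in> Y \<Longrightarrow> v \<in> V \<Longrightarrow> d x v \<le> 4"
  using ecc_ge ecc4 by metis

lemma far: "x \<in> Y \<Longrightarrow> \<exists>u\<in>V. d x u = 4"
  using ecc_ex ecc4 by metis

lemma pl3: "x \<in> Y \<Longrightarrow> m \<in> Y' \<Longrightarrow> \<not> E x m \<Longrightarrow> d x m = 3"
proof -
  assume a: "x \<in> Y" "m \<in> Y'" "\<not> E x m"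
  have V: "x \<in> V" "m \<in> V" using a YV Y'V by auto
  have "odd (d x m)" using d_par[OF V] a YY by auto
  moreover have "d x m \<noteq> 1" using d1 V a by blast
  moreover have "d x m \<le> 4" using within4 a V by blast
  ultimately show ?thesis by (elim oddE) presburger
qed

lemma path4: "x \<in> Y \<Longrightarrow> \<exists>m0 q n u. E x m0 \<and> E m0 q \<and> E q n \<and> E n u \<and> q \<noteq> x \<and> \<not> E x n
   \<and> d x u = 4 \<and> m0 \<in> Y' \<and> q \<in> Y \<and> n \<in> Y' \<and> u \<in> Y \<and> d x q = 2 \<and> d x n = 3"
proof -
  assume x: "x \<in> Y"
  then have xV: "x \<in> V" by (rule YV)
  obtain u where u: "u \<in> V" "d x u = 4" using far x by blast
  obtain n where n: "n \<in> V" "E n u" "d x n = 3" using d_pred[OF xV u(1), of 3] u by auto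
  obtain q where q: "q \<in> V" "E q n" "d x q = 2" using d_pred[OF xV n(1), of 2] n by auto
  obtain m where m: "m \<in> V" "E m q" "d x m = 1" using d_pred[OF xV q(1), of 1] q by auto
  have "E x m" using d1 xV m by blast
  moreover have "q \<noteq> x" using q d_self by auto
  moreover have "\<not> E x n" using d1[OF xV n(1)] n(3) by auto
  moreover have "m \<in> Y'" "q \<in> Y" "n \<in> Y'" "u \<in> Y" using EY EY' x \<open>E x m\<close> m q n by blast+
  ultimately show ?thesis using u n q m by blast
qed

lemma sph2_line: "x \<in> Y \<Longrightarrow> E x m \<Longrightarrow> sphere V E x 2 \<inter> nb m = nb m - {x}"
proof -
  assume a: "x \<in> Y" "E x m"
  have "m \<in> Y'" using EY a by blast
  show ?thesis
  proof (intro equalityI subsetI)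
    fix y assume "y \<in> sphere V E x 2 \<inter> nb m"
    then show "y \<in> nb m - {x}" using d_self by (auto simp: sphere_iff)
  next
    fix y assume y: "y \<in> nb m - {x}"
    then have "E m y" "y \<noteq> x" by (auto simp: nbhd_iff)
    then have "d x y = 2" using two_pts[of x y m] a Esym by metis
    then show "y \<in> sphere V E x 2 \<inter> nb m" using y Ein \<open>E m y\<close> by (auto simp: sphere_iff)
  qed
qed

lemma sph2_pt: "w \<in> Y' \<Longrightarrow> E w p \<Longrightarrow> sphere V E w 2 \<inter> nb p = nb p - {w}"
proof -
  assume a: "w \<in> Y'" "E w p"
  show ?thesis
  proof (intro equalityI subsetI)
    fix y assume "y \<in> sphere V E w 2 \<inter> nb p"
    then show "y \<in> nb p - {w}" using d_self by (auto simp: sphere_iff)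
  next
    fix y assume y: "y \<in> nb p - {w}"
    then have "E p y" "y \<noteq> w" by (auto simp: nbhd_iff)
    then have "d w y = 2" using two_pts[of w y p] a Esym by metis
    then show "y \<in> sphere V E w 2 \<inter> nb p" using y Ein \<open>E p y\<close> by (auto simp: sphere_iff)
  qed
qed

lemma dr_pt: "x \<in> Y \<Longrightarrow> E x m1 \<Longrightarrow> E x m2 \<Longrightarrow> card (nb m1) = card (nb m2)"
proof -
  assume a: "x \<in> Y" "E x m1" "E x m2"
  have xV: "x \<in> V" using a YV by auto
  have "dist_regularized_vertex V E x" using DR xV by blast
  moreover have "1 \<le> ecc V E x" using ecc4 a by auto
  moreover have "m1 \<in> sphere V E x 1" "m2 \<in> sphere V E x 1" using a sphere1 xV by (auto simp: nbhd_iff)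
  ultimately have "b_num V E 1 x m1 = b_num V E 1 x m2" unfolding dist_regularized_vertex_def by blast
  then have "card (sphere V E x (Suc 1) \<inter> nb m1) = card (sphere V E x (Suc 1) \<inter> nb m2)"
    unfolding b_num_def .
  then have "card (nb m1 - {x}) = card (nb m2 - {x})"
    by (simp only: Suc_1 sph2_line[OF a(1,2)] sph2_line[OF a(1,3)])
  moreover have "x \<in> nb m1" "x \<in> nb m2" using a Esym by (auto simp: nbhd_iff)
  moreover have "card (nb m1) > 0" "card (nb m2) > 0"
    using calculation(2,3) finite_nb card_gt_0_iff by blast+
  ultimately show ?thesis using card_Diff_singleton[of x "nb m1"] card_Diff_singleton[of x "nb m2"] by linarith
qed

lemma dr_ln: "w \<in> Y' \<Longrightarrow> E w p \<Longrightarrow> E w q \<Longrightarrow> card (nb p) = card (nb q)"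
proof -
  assume a: "w \<in> Y'" "E w p" "E w q"
  have wV: "w \<in> V" using a Y'V by auto
  have "dist_regularized_vertex V E w" using DR wV by blast
  moreover have "1 \<le> ecc V E w" using ecc_ge[of p w] d1[of w p] a Ein by auto
  moreover have "p \<in> sphere V E w 1" "q \<in> sphere V E w 1" using a sphere1 wV by (auto simp: nbhd_iff)
  ultimately have "b_num V E 1 w p = b_num V E 1 w q" unfolding dist_regularized_vertex_def by blast
  then have "card (sphere V E w (Suc 1) \<inter> nb p) = card (sphere V E w (Suc 1) \<inter> nb q)"
    unfolding b_num_def .
  then have "card (nb p - {w}) = card (nb q - {w})"
    by (simp only: Suc_1 sph2_pt[OF a(1,2)] sph2_pt[OF a(1,3)])
  moreover have "w \<in> nb p" "w \<in> nb q" using a Esym by (auto simp: nbhd_iff)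
  moreover have "card (nb p) > 0" "card (nb q) > 0"
    using calculation(2,3) finite_nb card_gt_0_iff by blast+
  ultimately show ?thesis using card_Diff_singleton[of w "nb p"] card_Diff_singleton[of w "nb q"] by linarith
qed

lemma dr_c3: "x \<in> Y \<Longrightarrow> m1 \<in> V \<Longrightarrow> m2 \<in> V \<Longrightarrow> d x m1 = 3 \<Longrightarrow> d x m2 = 3 \<Longrightarrow>
  card (sphere V E x 2 \<inter> nb m1) = card (sphere V E x 2 \<inter> nb m2)"
proof -
  assume a: "x \<in> Y" "m1 \<in> V" "m2 \<in> V" "d x m1 = 3" "d x m2 = 3"
  have xV: "x \<in> V" using a YV by auto
  have "dist_regularized_vertex V E x" using DR xV by blast
  moreover have "3 \<le> ecc V E x" using ecc4 a by auto
  moreover have "m1 \<in> sphere V E x 3" "m2 \<in> sphere V E x 3" using a by (auto simp: sphere_iff)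
  ultimately have "c_num V E 3 x m1 = c_num V E 3 x m2" unfolding dist_regularized_vertex_def by blast
  then show ?thesis by (simp add: c_num_def)
qed

lemma line_has_pt: "w \<in> Y' \<Longrightarrow> \<exists>p. E w p"
proof -
  assume w: "w \<in> Y'"
  obtain x where x: "x \<in> Y" using Yne by blast
  have V: "x \<in> V" "w \<in> V" using x w YV Y'V by auto
  have "odd (d x w)" using d_par[OF V] x w YY by auto
  then have "d x w \<noteq> 0" by (intro notI) simp
  then obtain k where "d x w = Suc k" using not0_implies_Suc by blast
  then obtain v where "v \<in> V" "E v w" using d_pred[OF V] by blast
  then show ?thesis using Esym by blast
qed

lemma size_ge2: "w \<in> Y' \<Longrightarrow> 2 \<le> card (nb w)"
proof -
  assume w: "w \<in> Y'"
  obtain p where p: "E w p" using line_has_pt w by blast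
  have pY: "p \<in> Y" using EY' w p by blast
  obtain m0 q where mq: "E p m0" "E m0 q" "q \<noteq> p" using path4[OF pY] by blast
  have "{p, q} \<subseteq> nb m0" using mq Esym by (auto simp: nbhd_iff)
  then have "card {p, q} \<le> card (nb m0)" by (rule card_mono[OF finite_nb])
  moreover have "card {p, q} = 2" using mq(3) by simp
  moreover have "card (nb w) = card (nb m0)" using dr_pt[OF pY Esym[OF p] mq(1)] .
  ultimately show ?thesis by simp
qed

end

context bgi
begin

lemma G2': 
  assumes G2: "\<forall>x\<in>Y. \<forall>y\<in>sphere V E x 2. \<forall>z\<in>sphere V E x 2 \<inter> sphere V E y 2.
           card (nbhd V E x \<inter> nbhd V E y \<inter> sphere V E z 1) = g"
  and a: "x \<in> Y" "y \<in> V" "z \<in> V" "d x y = 2" "d x z = 2" "d y z = 2"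
  shows "card (nb x \<inter> nb y \<inter> nb z) = g"
proof -
  have "y \<in> sphere V E x 2" "z \<in> sphere V E x 2 \<inter> sphere V E y 2" using a by (auto simp: sphere_iff)
  then have "card (nb x \<inter> nb y \<inter> sphere V E z 1) = g" using G2 a(1) by blast
  then show ?thesis unfolding sphere1[OF a(3)] .
qed

lemma G3': 
  assumes G3: "\<forall>x\<in>Y. \<forall>y\<in>sphere V E x 2. \<forall>z\<in>sphere V E x 3 \<inter> sphere V E y 3.
           card (nbhd V E x \<inter> nbhd V E y \<inter> sphere V E z 2) = g"
  and a: "x \<in> Y" "y \<in> V" "z \<in> V" "d x y = 2" "d x z = 3" "d y z = 3"
  shows "card (nb x \<inter> nb y \<inter> sphere V E z 2) = g"
proof -
  have "y \<in> sphere V E x 2" "z \<in> sphere V E x 3 \<inter> sphere V E y 3" using a by (auto simp: sphere_iff)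
  then show ?thesis using G3 a(1) by blast
qed

lemma size_le2: assumes l: "l \<in> Y'" shows "card (nb l) \<le> 2"
proof (rule ccontr)
  assume "\<not> ?thesis"
  then have c3: "3 \<le> card (nb l)" by simp
  obtain g2 where G2: "\<forall>x\<in>Y. \<forall>y\<in>sphere V E x 2. \<forall>z\<in>sphere V E x 2 \<inter> sphere V E y 2.
           card (nbhd V E x \<inter> nbhd V E y \<inter> sphere V E z 1) = g2" using g2 by blast
  obtain g3 where G3: "\<forall>x\<in>Y. \<forall>y\<in>sphere V E x 2. \<forall>z\<in>sphere V E x 3 \<inter> sphere V E y 3.
           card (nbhd V E x \<inter> nbhd V E y \<inter> sphere V E z 2) = g3" using g3 by blast
  have "nb l \<noteq> {}" using c3 by auto
  then obtain x where lx: "E l x" by (auto simp: nbhd_iff)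
  have xY: "x \<in> Y" using EY' l lx by blast
  obtain m0 q n u where P: "E x m0" "E m0 q" "E q n" "E n u" "q \<noteq> x" "\<not> E x n"
    "d x u = 4" "m0 \<in> Y'" "q \<in> Y" "n \<in> Y'" "u \<in> Y" "d x q = 2" "d x n = 3"
    using path4[OF xY] by blast
  have "card (nb l) = card (nb m0)" using dr_pt[OF xY Esym[OF lx] P(1)] .
  then have cm0: "3 \<le> card (nb m0)" using c3 by simp
  have mn: "m0 \<noteq> n" using P(1,6) by blast
  have "card (nb m0) = card (nb n)" using dr_pt[OF P(9) Esym[OF P(2)] P(3)] .
  then have cn: "3 \<le> card (nb n)" using cm0 by simp
  have "card {x, q} < card (nb m0)" using cm0 by (cases "x = q") auto
  then obtain y where y: "y \<in> nb m0" "y \<notin> {x, q}" using card_ex_notin[OF finite_nb, of "{x,q}"] by auto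
  then have m0y: "E m0 y" by (simp add: nbhd_iff)
  have yY: "y \<in> Y" using EY' P(8) m0y by blast
  have yn: "\<not> E y n"
  proof
    assume "E y n"
    then have "m0 = n" using uniq[OF P(8), of y q n] y Esym[OF m0y] Esym[OF P(2)] P(3) by blast
    then show False using mn by blast
  qed
  have dxy: "d x y = 2" using two_pts[of x y m0] y P(1) Esym[OF m0y] by blast
  have dyn: "d y n = 3" using pl3[OF yY P(10) yn] .
  have dnm: "d n m0 = 2" using two_pts[of n m0 q, OF mn[symmetric] Esym[OF P(3)] P(2)] .
  have "nb x \<inter> nb y \<inter> sphere V E n 2 = {m0}"
  proof (intro equalityI subsetI)
    fix w assume "w \<in> nb x \<inter> nb y \<inter> sphere V E n 2"
    then have "E x w" "E y w" by (auto simp: nbhd_iff)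
    then show "w \<in> {m0}" using uniq[OF P(8), of x y w] y P(1) Esym[OF m0y] by auto
  next
    fix w assume "w \<in> {m0}"
    then show "w \<in> nb x \<inter> nb y \<inter> sphere V E n 2"
      using P(1) Esym[OF m0y] dnm Y'V[OF P(8)] by (auto simp: nbhd_iff sphere_iff)
  qed
  moreover have "card (nb x \<inter> nb y \<inter> sphere V E n 2) = g3"
    using G3'[OF G3 xY YV[OF yY] Y'V[OF P(10)] dxy P(13) dyn] .
  ultimately have g3v: "g3 = 1" by simp
  have dyq: "d y q = 2" using two_pts[of y q m0] y Esym[OF m0y] Esym[OF P(2)] by blast
  have "nb x \<inter> nb y \<inter> nb q = {m0}"
  proof (intro equalityI subsetI)
    fix w assume "w \<in> nb x \<inter> nb y \<inter> nb q"
    then have "E x w" "E y w" by (auto simp: nbhd_iff)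
    then show "w \<in> {m0}" using uniq[OF P(8), of x y w] y P(1) Esym[OF m0y] by auto
  next
    fix w assume "w \<in> {m0}"
    then show "w \<in> nb x \<inter> nb y \<inter> nb q"
      using P(1,2) Esym[OF m0y] Esym[OF P(2)] by (auto simp: nbhd_iff)
  qed
  moreover have "card (nb x \<inter> nb y \<inter> nb q) = g2"
    using G2'[OF G2 xY YV[OF yY] YV[OF P(9)] dxy P(12) dyq] .
  ultimately have g2v: "g2 = 1" by simp
  have qV: "q \<in> V" using YV P(9) by blast
  obtain u' where u': "u' \<in> V" "d q u' = 4" using far P(9) by blast
  obtain n1 where n1: "n1 \<in> V" "E n1 u'" "d q n1 = 3" using d_pred[OF qV u'(1), of 3] u' by auto
  have "\<not> (q \<in> Y) = (n1 \<in> Y)" using d_par[OF qV n1(1)] n1(3) by simp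
  then have n1Y': "n1 \<in> Y'" using n1(1) VY P(9) by blast
  have qn1: "\<not> E q n1" using d1[OF qV n1(1)] n1(3) by simp
  have meet: "\<exists>a. E n1 a \<and> E a L" if L: "L \<in> Y'" "E q L" "3 \<le> card (nb L)" for L
  proof -
    have "card {q} < card (nb L)" using L by simp
    then obtain y1 where y1: "y1 \<in> nb L" "y1 \<notin> {q}" using card_ex_notin[OF finite_nb, of "{q}"] by auto
    have "card {q, y1} < card (nb L)" using L by (cases "q = y1") auto
    then obtain y2 where y2: "y2 \<in> nb L" "y2 \<notin> {q, y1}" using card_ex_notin[OF finite_nb, of "{q,y1}"] by auto
    have "\<exists>y'. E L y' \<and> y' \<noteq> q \<and> \<not> E y' n1"
    proof (rule ccontr)
      assume "\<not> ?thesis"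
      then have "E y1 n1" "E y2 n1" using y1 y2 by (auto simp: nbhd_iff)
      moreover have "E y1 L" "E y2 L" "y1 \<noteq> y2" using y1 y2 Esym by (auto simp: nbhd_iff)
      ultimately have "L = n1" using uniq[OF L(1), of y1 y2 n1] by blast
      then show False using qn1 L by blast
    qed
    then obtain y' where y': "E L y'" "y' \<noteq> q" "\<not> E y' n1" by blast
    have y'Y: "y' \<in> Y" using EY' L(1) y'(1) by blast
    have dqy: "d q y' = 2" using two_pts[of q y' L] y'(2) L(2) Esym[OF y'(1)] by blast
    have dyn1: "d y' n1 = 3" using pl3[OF y'Y n1Y' y'(3)] .
    have "card (nb q \<inter> nb y' \<inter> sphere V E n1 2) = 1"
      using G3'[OF G3 P(9) YV[OF y'Y] n1(1) dqy n1(3) dyn1] g3v by simp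
    then have "nb q \<inter> nb y' \<inter> sphere V E n1 2 \<noteq> {}" by auto
    then obtain w where w: "E q w" "E y' w" "w \<in> V" "d n1 w = 2" by (auto simp: nbhd_iff sphere_iff)
    have "L = w" using uniq[OF L(1), of q y' w] L(2) y'(2) w Esym[OF y'(1)] by blast
    then have "d n1 L = 2" using w by simp
    then obtain a where "a \<in> V" "E n1 a" "E a L" using d2_common n1(1) Y'V[OF L(1)] by blast
    then show ?thesis by blast
  qed
  obtain a where a: "E n1 a" "E a m0" using meet[OF P(8) Esym[OF P(2)] cm0] by blast
  obtain b where b: "E n1 b" "E b n" using meet[OF P(10) P(3) cn] by blast
  have aq: "a \<noteq> q" using a qn1 Esym by blast
  have bq: "b \<noteq> q" using b qn1 Esym by blast
  have ab: "a \<noteq> b"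
  proof
    assume "a = b"
    then have "m0 = n" using uniq[OF P(8), of a q n] a b aq P(3) Esym[OF P(2)] by blast
    then show False using mn by blast
  qed
  have aY: "a \<in> Y" using EY' n1Y' a(1) by blast
  have bV: "b \<in> V" using Ein b by blast
  have dab: "d a b = 2" using two_pts[of a b n1] ab Esym[OF a(1)] Esym[OF b(1)] by blast
  have daq: "d a q = 2" using two_pts[of a q m0] aq a P(2) Esym[OF P(2)] by blast
  have dbq: "d b q = 2" using two_pts[of b q n] bq b P(3) by blast
  have "card (nb a \<inter> nb b \<inter> nb q) = 1" using G2'[OF G2 aY bV qV dab daq dbq] g2v by simp
  then have "nb a \<inter> nb b \<inter> nb q \<noteq> {}" by auto
  then obtain L where L: "E a L" "E b L" "E q L" by (auto simp: nbhd_iff)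
  have "n1 = L" using uniq[OF n1Y', of a b L] ab L Esym[OF a(1)] Esym[OF b(1)] by blast
  then show False using qn1 L by blast
qed

lemma line2: "w \<in> Y' \<Longrightarrow> \<exists>a b. a \<noteq> b \<and> nb w = {a, b}"
  using size_ge2 size_le2 card_2_iff by (metis le_antisym)

end

context bgi
begin

lemma line2': "w \<in> Y' \<Longrightarrow> E w b \<Longrightarrow> E w c \<Longrightarrow> b \<noteq> c \<Longrightarrow> nb w = {b, c}"
proof -
  assume a: "w \<in> Y'" "E w b" "E w c" "b \<noteq> c"
  have "card (nb w) = 2" using size_ge2[OF a(1)] size_le2[OF a(1)] by simp
  moreover have "{b, c} \<subseteq> nb w" using a by (auto simp: nbhd_iff)
  moreover have "card {b, c} = 2" using a(4) by simp
  ultimately show ?thesis using card_subset_eq[OF finite_nb] by metis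
qed

lemma notri: "x \<in> Y \<Longrightarrow> w \<in> Y' \<Longrightarrow> \<not> E x w \<Longrightarrow> E w b \<Longrightarrow> E w c \<Longrightarrow> b \<noteq> c
   \<Longrightarrow> d x b = 2 \<Longrightarrow> d x c = 2 \<Longrightarrow> False"
proof -
  assume a: "x \<in> Y" "w \<in> Y'" "\<not> E x w" "E w b" "E w c" "b \<noteq> c" "d x b = 2" "d x c = 2"
  have nw: "nb w = {b, c}" using line2'[OF a(2,4,5,6)] .
  have "sphere V E x 2 \<inter> nb w = {b, c}" using nw a Ein by (auto simp: sphere_iff)
  then have c2: "card (sphere V E x 2 \<inter> nb w) = 2" using a(6) by simp
  obtain n u where P: "E n u" "d x u = 4" "d x n = 3" "n \<in> Y'"
    using path4[OF a(1)] by blast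
  have "sphere V E x 2 \<inter> nb n \<subseteq> nb n - {u}" using P(2) by (auto simp: sphere_iff)
  moreover have "card (nb n - {u}) = 1"
    using size_ge2[OF P(4)] size_le2[OF P(4)] P(1) by (simp add: nbhd_iff)
  ultimately have c1: "card (sphere V E x 2 \<inter> nb n) \<le> 1"
    by (metis card_mono finite_Diff finite_nb)
  have "d x w = 3" using pl3[OF a(1,2,3)] .
  then have "card (sphere V E x 2 \<inter> nb w) = card (sphere V E x 2 \<inter> nb n)"
    using dr_c3[OF a(1) Y'V[OF a(2)] Y'V[OF P(4)] _ P(3)] by blast
  then show False using c1 c2 by simp
qed

lemma pt_d2: "x \<in> Y \<Longrightarrow> y \<in> Y \<Longrightarrow> d x y = 2 \<Longrightarrow> \<exists>w\<in>Y'. E x w \<and> E y w"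
proof -
  assume a: "x \<in> Y" "y \<in> Y" "d x y = 2"
  then obtain w where "w \<in> V" "E x w" "E w y" using d2_common YV by blast
  then show ?thesis using EY a Esym by blast
qed

lemma pt_d: "x \<in> Y \<Longrightarrow> y \<in> Y \<Longrightarrow> d x y = 0 \<or> d x y = 2 \<or> d x y = 4"
proof -
  assume a: "x \<in> Y" "y \<in> Y"
  have "even (d x y)" using d_par[OF YV[OF a(1)] YV[OF a(2)]] a by simp
  moreover have "d x y \<le> 4" using within4 a YV by blast
  ultimately show ?thesis by (elim evenE) presburger
qed

end

locale bgi0 = bgi +
  fixes x0 assumes x0: "x0 \<in> Y"
begin

definition "B = {y\<in>Y. d x0 y = 2}"
definition "A = Y - B"

lemma x0A: "x0 \<in> A" using x0 d_self by (simp add: A_def B_def)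

lemma AB: "A \<inter> B = {}" "A \<union> B = Y" "A \<subseteq> Y" "B \<subseteq> Y"
  by (auto simp: A_def B_def)

lemma finAB: "finite A" "finite B"
  using AB finV VY by (meson finite_subset le_sup_iff order_refl)+

lemma Fline: "w \<in> Y' \<Longrightarrow> \<exists>a b. a \<in> A \<and> b \<in> B \<and> nb w = {a, b}"
proof -
  assume w: "w \<in> Y'"
  obtain p q where pq: "p \<noteq> q" "nb w = {p, q}" using line2[OF w] by blast
  have E: "E w p" "E w q" using pq by (auto simp: nbhd_iff)
  have Y: "p \<in> Y" "q \<in> Y" using E EY' w by blast+
  have notBB: False if "p \<in> B" "q \<in> B"
  proof -
    have "\<not> E x0 w"
    proof
      assume "E x0 w"
      then have "x0 \<in> {p, q}" using pq Esym by (auto simp: nbhd_iff)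
      then show False using that d_self by (auto simp: B_def)
    qed
    then show False using notri[OF x0 w _ E pq(1)] that by (auto simp: B_def)
  qed
  have notAA: False if "p \<in> A" "q \<in> A"
  proof (cases "E x0 w")
    case True
    then have "x0 = p \<or> x0 = q" using pq Esym by (auto simp: nbhd_iff)
    then show False
    proof
      assume "x0 = p"
      then have "d x0 q = 2" using two_pts[of x0 q w] pq(1) Esym E by blast
      then show False using that Y by (auto simp: A_def B_def)
    next
      assume "x0 = q"
      then have "d x0 p = 2" using two_pts[of x0 p w] pq(1) Esym E by blast
      then show False using that Y by (auto simp: A_def B_def)
    qed
  next
    case False
    then have "d x0 w = 3" using pl3[OF x0 w] by blast
    then obtain v where v: "v \<in> V" "E v w" "d x0 v = 2" using d_pred[OF YV[OF x0] Y'V[OF w], of 2] by auto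
    then have "v \<in> {p, q}" using pq Esym by (auto simp: nbhd_iff)
    moreover have "v \<in> Y" using v EY' w Esym by blast
    ultimately show False using that v by (auto simp: A_def B_def)
  qed
  have "(p \<in> A \<and> q \<in> B) \<or> (p \<in> B \<and> q \<in> A)" using notAA notBB Y AB by blast
  then show ?thesis using pq by (metis insert_commute)
qed

lemma Fcomp: "a \<in> A \<Longrightarrow> b \<in> B \<Longrightarrow> \<exists>w\<in>Y'. E a w \<and> E b w"
proof -
  assume a: "a \<in> A" "b \<in> B"
  have Y: "a \<in> Y" "b \<in> Y" using a AB by auto
  show ?thesis
  proof (cases "a = x0")
    case True
    then show ?thesis using pt_d2[OF Y] a by (auto simp: B_def)
  next
    case False
    have "d x0 a \<noteq> 0" using d0 False x0 Y YV by blast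
    moreover have "d x0 a \<noteq> 2" using a by (auto simp: A_def B_def)
    ultimately have "d x0 a = 4" using pt_d[OF x0 Y(1)] by auto
    then obtain n where n: "n \<in> V" "E n a" "d x0 n = 3" using d_pred[OF YV[OF x0] YV[OF Y(1)], of 3] by auto
    have nY: "n \<in> Y'" using EY Y(1) Esym[OF n(2)] by blast
    obtain a' c where ac: "a' \<in> A" "c \<in> B" "nb n = {a', c}" using Fline[OF nY] by blast
    have "a \<in> nb n" using n by (simp add: nbhd_iff)
    then have "a = a'" using ac a AB by auto
    have cn: "E n c" using ac by (auto simp: nbhd_iff)
    show ?thesis
    proof (cases "b = c")
      case True
      then show ?thesis using nY Esym n cn by blast
    next
      case bc: False
      have "b \<noteq> a" using a AB by auto
      then have "\<not> E b n" using ac bc \<open>a = a'\<close> Esym by (auto simp: nbhd_iff)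
      then have "d b n = 3" using pl3[OF Y(2) nY] by blast
      then obtain v where v: "v \<in> V" "E v n" "d b v = 2" using d_pred[OF YV[OF Y(2)] n(1), of 2] by auto
      then have "v \<in> {a, c}" using ac \<open>a = a'\<close> Esym by (auto simp: nbhd_iff)
      then have "v = a \<or> v = c" by auto
      then show ?thesis
      proof
        assume "v = a"
        then show ?thesis using pt_d2[OF Y(2) Y(1)] v by blast
      next
        assume "v = c"
        then obtain w' where w': "w' \<in> Y'" "E b w'" "E c w'" using pt_d2[OF Y(2)] v ac AB by blast
        obtain a'' b'' where ab'': "a'' \<in> A" "b'' \<in> B" "nb w' = {a'', b''}" using Fline[OF w'(1)] by blast
        have "b \<in> {a'', b''}" "c \<in> {a'', b''}" using w' ab'' Esym by (auto simp: nbhd_iff)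
        then have "b = b''" "c = b''" using ab'' a AB ac by auto
        then show ?thesis using bc by simp
      qed
    qed
  qed
qed

definition "endA w = (SOME a. a \<in> A \<and> E w a)"
definition "endB w = (SOME b. b \<in> B \<and> E w b)"

lemma ends: "w \<in> Y' \<Longrightarrow> endA w \<in> A \<and> endB w \<in> B \<and> nb w = {endA w, endB w}"
proof -
  assume w: "w \<in> Y'"
  obtain a b where ab: "a \<in> A" "b \<in> B" "nb w = {a, b}" using Fline[OF w] by blast
  have "endA w \<in> A \<and> E w (endA w)" unfolding endA_def
    by (rule someI[of _ a]) (use ab in \<open>auto simp: nbhd_iff\<close>)
  then have "endA w = a" using ab AB by (auto simp: nbhd_iff)
  have "endB w \<in> B \<and> E w (endB w)" unfolding endB_def
    by (rule someI[of _ b]) (use ab in \<open>auto simp: nbhd_iff\<close>)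
  then have "endB w = b" using ab AB by (auto simp: nbhd_iff)
  show ?thesis using ab \<open>endA w = a\<close> \<open>endB w = b\<close> by simp
qed

lemma end_eq: "w \<in> Y' \<Longrightarrow> E w p \<Longrightarrow> (p \<in> A \<longrightarrow> endA w = p) \<and> (p \<in> B \<longrightarrow> endB w = p)"
proof -
  assume a: "w \<in> Y'" "E w p"
  then have "p \<in> nb w" by (simp add: nbhd_iff)
  then have "p = endA w \<or> p = endB w" using ends[OF a(1)] by auto
  then show ?thesis using ends[OF a(1)] AB by auto
qed

lemma lines_eq: "w1 \<in> Y' \<Longrightarrow> w2 \<in> Y' \<Longrightarrow> endA w1 = endA w2 \<Longrightarrow> endB w1 = endB w2 \<Longrightarrow> w1 = w2"
proof -
  assume a: "w1 \<in> Y'" "w2 \<in> Y'" "endA w1 = endA w2" "endB w1 = endB w2"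
  have "endA w1 \<noteq> endB w1" using ends[OF a(1)] AB by auto
  moreover have "endA w1 \<in> nb w1" "endB w1 \<in> nb w1" "endA w1 \<in> nb w2" "endB w1 \<in> nb w2"
    using ends[OF a(1)] ends[OF a(2)] a by auto
  then have "E (endA w1) w1" "E (endB w1) w1" "E (endA w1) w2" "E (endB w1) w2"
    using Esym by (auto simp: nbhd_iff)
  ultimately show ?thesis using uniq[OF a(1)] by blast
qed

lemma bijA: "a \<in> A \<Longrightarrow> bij_betw endB (nb a) B"
proof -
  assume a: "a \<in> A"
  have aY: "a \<in> Y" using a AB by auto
  have L: "w \<in> Y' \<and> endA w = a" if "w \<in> nb a" for w
  proof -
    have "E a w" using that by (simp add: nbhd_iff)
    then have "w \<in> Y'" using EY aY by blast
    then show ?thesis using end_eq[of w a] Esym \<open>E a w\<close> a by blast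
  qed
  show ?thesis unfolding bij_betw_def
  proof
    show "inj_on endB (nb a)" using L lines_eq by (metis inj_onI)
    show "endB ` nb a = B"
    proof (intro equalityI subsetI)
      fix b assume "b \<in> endB ` nb a"
      then show "b \<in> B" using L ends by blast
    next
      fix b assume b: "b \<in> B"
      then obtain w where w: "w \<in> Y'" "E a w" "E b w" using Fcomp a by blast
      then have "endB w = b" using end_eq[of w b] Esym b by blast
      then show "b \<in> endB ` nb a" using w by (auto simp: nbhd_iff)
    qed
  qed
qed

lemma bijB: "b \<in> B \<Longrightarrow> bij_betw endA (nb b) A"
proof -
  assume b: "b \<in> B"
  have bY: "b \<in> Y" using b AB by auto
  have L: "w \<in> Y' \<and> endB w = b" if "w \<in> nb b" for w
  proof -
    have "E b w" using that by (simp add: nbhd_iff)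
    then have "w \<in> Y'" using EY bY by blast
    then show ?thesis using end_eq[of w b] Esym \<open>E b w\<close> b by blast
  qed
  show ?thesis unfolding bij_betw_def
  proof
    show "inj_on endA (nb b)" using L lines_eq by (metis inj_onI)
    show "endA ` nb b = A"
    proof (intro equalityI subsetI)
      fix a assume "a \<in> endA ` nb b"
      then show "a \<in> A" using L ends by blast
    next
      fix a assume a: "a \<in> A"
      then obtain w where w: "w \<in> Y'" "E a w" "E b w" using Fcomp b by blast
      then have "endA w = a" using end_eq[of w a] Esym a by blast
      then show "a \<in> endA ` nb b" using w by (auto simp: nbhd_iff)
    qed
  qed
qed

lemma cardAB: "card A = card B"
proof -
  obtain m0 where m0: "E x0 m0" "m0 \<in> Y'" using path4[OF x0] by blast
  have "endA m0 = x0" using end_eq[OF m0(2) Esym[OF m0(1)]] x0A by blast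
  moreover have "E m0 (endB m0)" "E m0 (endA m0)" using ends[OF m0(2)] by (auto simp: nbhd_iff)
  ultimately have "card (nb x0) = card (nb (endB m0))" using dr_ln[OF m0(2)] by metis
  moreover have "card (nb x0) = card B" using bijA[OF x0A] bij_betw_same_card by blast
  moreover have "card (nb (endB m0)) = card A" using bijB ends[OF m0(2)] bij_betw_same_card by blast
  ultimately show ?thesis by simp
qed

lemma cardA2: "2 \<le> card A"
proof -
  obtain u where u: "u \<in> V" "d x0 u = 4" using far x0 by blast
  have "(x0 \<in> Y) = (u \<in> Y)" using d_par[OF YV[OF x0] u(1)] u by simp
  then have "u \<in> A" using x0 u by (auto simp: A_def B_def)
  moreover have "u \<noteq> x0" using u d_self by auto
  ultimately have "{x0, u} \<subseteq> A" using x0A by auto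
  then have "card {x0, u} \<le> card A" using card_mono finAB by blast
  then show ?thesis using \<open>u \<noteq> x0\<close> by simp
qed

end

lemma subdiv_E_sym: "subdiv_E R p q \<longleftrightarrow> subdiv_E R q p"
  by (auto simp: subdiv_E_def)

lemma subdiv_E_LL: "\<not> subdiv_E R (Inl a) (Inl b)"
  by (auto simp: subdiv_E_def)

lemma subdiv_E_RR: "\<not> subdiv_E R (Inr a) (Inr b)"
  by (auto simp: subdiv_E_def)

lemma subdiv_E_LR: "Knn_E n a b \<Longrightarrow> subdiv_E (Knn_E n) (Inl x) (Inr {a, b}) \<longleftrightarrow> x \<in> {a, b}"
proof
  assume "subdiv_E (Knn_E n) (Inl x) (Inr {a, b})"
  then obtain u v where "Knn_E n u v" "x = u" "{a, b} = {u, v}" by (auto simp: subdiv_E_def)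
  then show "x \<in> {a, b}" by auto
next
  assume k: "Knn_E n a b" and "x \<in> {a, b}"
  then have "x = a \<or> x = b" by auto
  then show "subdiv_E (Knn_E n) (Inl x) (Inr {a, b})"
  proof
    assume "x = a" then show ?thesis using k unfolding subdiv_E_def by blast
  next
    assume "x = b"
    moreover have "Knn_E n b a" using k by (auto simp: Knn_E_def)
    moreover have "{a, b} = {b, a}" by auto
    ultimately show ?thesis unfolding subdiv_E_def by metis
  qed
qed

context bgi0
begin

lemma constr: "\<exists>n::nat. n \<ge> 2 \<and> (\<exists>f. bij_betw f V (subdiv_V (Knn_V n) (Knn_E n)) \<and>
              (\<forall>x\<in>V. \<forall>y\<in>V. E x y \<longleftrightarrow> subdiv_E (Knn_E n) (f x) (f y)) \<and>
              f ` Y = Inl ` Knn_V n)"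
proof -
  define n where "n = card A"
  obtain \<phi> where \<phi>: "bij_betw \<phi> A {0..<n}" using ex_bij_betw_finite_nat[OF finAB(1)] n_def by blast
  obtain \<psi> where \<psi>: "bij_betw \<psi> B {0..<n}" using ex_bij_betw_finite_nat[OF finAB(2)] n_def cardAB by auto
  define h where "h p = (if p \<in> A then \<phi> p else n + \<psi> p)" for p
  have hA: "h p < n" if "p \<in> A" for p using that \<phi> by (auto simp: h_def bij_betw_def)
  have hB: "n \<le> h p \<and> h p < 2 * n" if "p \<in> B" for p
    using that \<psi> AB by (auto simp: h_def bij_betw_def)
  have hinj: "inj_on h Y"
  proof (rule inj_onI)
    fix p q assume pq: "p \<in> Y" "q \<in> Y" "h p = h q"
    show "p = q"
    proof (cases "p \<in> A")
      case True
      show ?thesis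
      proof (cases "q \<in> A")
        case True
        then show ?thesis using \<open>p \<in> A\<close> pq \<phi> by (auto simp: h_def bij_betw_def inj_on_def)
      next
        case False
        then have "q \<in> B" using pq AB by auto
        then show ?thesis using hA[OF \<open>p \<in> A\<close>] hB pq by force
      qed
    next
      case False
      then have pB: "p \<in> B" using pq AB by auto
      show ?thesis
      proof (cases "q \<in> A")
        case True
        then show ?thesis using hA hB[OF pB] pq by force
      next
        case False
        then have "q \<in> B" using pq AB by auto
        then show ?thesis using pB pq \<psi> AB \<open>p \<notin> A\<close> \<open>q \<notin> A\<close>
          by (auto simp: h_def bij_betw_def inj_on_def)
      qed
    qed
  qed
  have hsurjA: "\<exists>a\<in>A. h a = k" if "k < n" for k
  proof -
    have "k \<in> \<phi> ` A" using \<phi> that by (auto simp: bij_betw_def)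
    then show ?thesis by (auto simp: h_def)
  qed
  have hsurjB: "\<exists>b\<in>B. h b = k" if "n \<le> k" "k < 2 * n" for k
  proof -
    have "k - n \<in> \<psi> ` B" using \<psi> that by (auto simp: bij_betw_def)
    then obtain b where "b \<in> B" "\<psi> b = k - n" by auto
    moreover have "b \<notin> A" using \<open>b \<in> B\<close> AB by auto
    ultimately show ?thesis using that by (auto simp: h_def)
  qed
  have himg: "h ` Y = {0..<2 * n}"
  proof (intro equalityI subsetI)
    fix k assume "k \<in> h ` Y"
    then show "k \<in> {0..<2 * n}" using hA hB AB by fastforce
  next
    fix k assume k: "k \<in> {0..<2 * n}"
    show "k \<in> h ` Y"
    proof (cases "k < n")
      case True then show ?thesis using hsurjA AB by blast
    next
      case False then show ?thesis using hsurjB[of k] k AB by auto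
    qed
  qed
  define f where "f v = (if v \<in> Y then Inl (h v) else Inr {h (endA v), h (endB v)})" for v
  have fY: "f v = Inl (h v)" if "v \<in> Y" for v using that by (simp add: f_def)
  have fY': "f w = Inr {h (endA w), h (endB w)}" if "w \<in> Y'" for w using that YY by (auto simp: f_def)
  have knn: "Knn_E n (h (endA w)) (h (endB w))" if "w \<in> Y'" for w
    using hA hB ends[OF that] by (auto simp: Knn_E_def)
  have key: "subdiv_E (Knn_E n) (f x) (f w) \<longleftrightarrow> E x w" if "x \<in> Y" "w \<in> Y'" for x w
  proof -
    have "subdiv_E (Knn_E n) (f x) (f w) \<longleftrightarrow> h x \<in> {h (endA w), h (endB w)}"
      using fY[OF that(1)] fY'[OF that(2)] subdiv_E_LR[OF knn[OF that(2)]] by simp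
    also have "\<dots> \<longleftrightarrow> x \<in> {endA w, endB w}"
      using hinj that(1) ends[OF that(2)] AB by (auto simp: inj_on_def)
    also have "\<dots> \<longleftrightarrow> x \<in> nb w" using ends[OF that(2)] by simp
    also have "\<dots> \<longleftrightarrow> E x w" using Esym by (auto simp: nbhd_iff)
    finally show ?thesis .
  qed
  have edges: "\<forall>x\<in>V. \<forall>y\<in>V. E x y \<longleftrightarrow> subdiv_E (Knn_E n) (f x) (f y)"
  proof (intro ballI)
    fix x y assume xy: "x \<in> V" "y \<in> V"
    show "E x y \<longleftrightarrow> subdiv_E (Knn_E n) (f x) (f y)"
    proof (cases "x \<in> Y")
      case xY: True
      show ?thesis
      proof (cases "y \<in> Y")
        case True
        then show ?thesis using xY notEYY fY subdiv_E_LL by metis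
      next
        case False
        then have "y \<in> Y'" using xy VY by auto
        then show ?thesis using key xY by blast
      qed
    next
      case False
      then have xY': "x \<in> Y'" using xy VY by auto
      show ?thesis
      proof (cases "y \<in> Y")
        case True
        then show ?thesis using key[OF True xY'] subdiv_E_sym Esym by metis
      next
        case False
        then have "y \<in> Y'" using xy VY by auto
        then show ?thesis using xY' notEY'Y' fY' subdiv_E_RR by metis
      qed
    qed
  qed
  have finj: "inj_on f V"
  proof (rule inj_onI)
    fix x y assume xy: "x \<in> V" "y \<in> V" "f x = f y"
    show "x = y"
    proof (cases "x \<in> Y")
      case xY: True
      show ?thesis
      proof (cases "y \<in> Y")
        case True
        then show ?thesis using xY xy fY hinj by (auto simp: inj_on_def)
      next
        case False
        then have "y \<in> Y'" using xy VY by auto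
        then show ?thesis using xY xy fY fY' by auto
      qed
    next
      case False
      then have xY': "x \<in> Y'" using xy VY by auto
      show ?thesis
      proof (cases "y \<in> Y")
        case True
        then show ?thesis using xY' xy fY fY' by auto
      next
        case False
        then have yY': "y \<in> Y'" using xy VY by auto
        have "{h (endA x), h (endB x)} = {h (endA y), h (endB y)}" using xy fY' xY' yY' by auto
        moreover have "h (endA x) < n" "h (endA y) < n" "n \<le> h (endB x)" "n \<le> h (endB y)"
          using hA hB ends xY' yY' by auto
        ultimately have "h (endA x) = h (endA y)" "h (endB x) = h (endB y)"
          by (auto simp: doubleton_eq_iff)
        moreover have "endA x \<in> Y" "endA y \<in> Y" "endB x \<in> Y" "endB y \<in> Y"
          using ends xY' yY' AB by auto
        ultimately have "endA x = endA y" "endB x = endB y" using hinj by (auto simp: inj_on_def)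
        then show ?thesis using lines_eq xY' yY' by blast
      qed
    qed
  qed
  have fYimg: "f ` Y = Inl ` Knn_V n"
  proof -
    have "f ` Y = Inl ` (h ` Y)" using fY by (auto simp: image_iff)
    then show ?thesis using himg by (simp add: Knn_V_def)
  qed
  have lineimg: "\<exists>w\<in>Y'. f w = Inr {u, v}" if uv: "u < n" "n \<le> v" "v < 2 * n" for u v
  proof -
    obtain a where a: "a \<in> A" "h a = u" using hsurjA uv by blast
    obtain b where b: "b \<in> B" "h b = v" using hsurjB uv by blast
    obtain w where w: "w \<in> Y'" "E a w" "E b w" using Fcomp a b by blast
    have "endA w = a" "endB w = b" using end_eq[OF w(1)] Esym w a b by blast+
    then show ?thesis using fY' w a b by blast
  qed
  have fY'img: "f ` Y' = {Inr {u, v} | u v. Knn_E n u v} \<and> True"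
  proof (intro conjI TrueI equalityI subsetI)
    fix z :: "nat + nat set" assume "z \<in> f ` Y'"
    then obtain w where w: "w \<in> Y'" "z = f w" by blast
    then have "z = Inr {h (endA w), h (endB w)}" using fY' by simp
    then show "z \<in> {Inr {u, v} | u v. Knn_E n u v}" using knn[OF w(1)] by blast
  next
    fix z :: "nat + nat set" assume "z \<in> {Inr {u, v} | u v. Knn_E n u v}"
    then obtain u v where z: "z = Inr {u, v}" "Knn_E n u v" by blast
    then have "(u < n \<and> n \<le> v \<and> v < 2 * n) \<or> (v < n \<and> n \<le> u \<and> u < 2 * n)" by (simp add: Knn_E_def)
    then show "z \<in> f ` Y'"
    proof
      assume "u < n \<and> n \<le> v \<and> v < 2 * n"
      then obtain w where w: "w \<in> Y'" "f w = Inr {u, v}" using lineimg by blast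
      then have "z = f w" using z by simp
      then show ?thesis using w(1) by blast
    next
      assume "v < n \<and> n \<le> u \<and> u < 2 * n"
      then obtain w where w: "w \<in> Y'" "f w = Inr {v, u}" using lineimg by blast
      then have "z = f w" using z by (simp add: insert_commute)
      then show ?thesis using w(1) by blast
    qed
  qed
  have "f ` V = f ` Y \<union> f ` Y'" unfolding VY by (rule image_Un)
  also have "\<dots> = subdiv_V (Knn_V n) (Knn_E n)"
    unfolding subdiv_V_def fYimg fY'img[THEN conjunct1] ..
  finally have "bij_betw f V (subdiv_V (Knn_V n) (Knn_E n))" using finj by (simp add: bij_betw_def)
  moreover have "n \<ge> 2" using cardA2 n_def by simp
  ultimately show ?thesis using edges fYimg by (intro exI[of _ n] conjI exI[of _ f]) auto
qed

end

context bg
begin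

lemma pt_d2': "x \<in> Y \<Longrightarrow> y \<in> V \<Longrightarrow> d x y = 2 \<Longrightarrow> y \<in> Y \<and> (\<exists>w\<in>Y'. E x w \<and> E y w)"
proof -
  assume a: "x \<in> Y" "y \<in> V" "d x y = 2"
  then obtain w where w: "w \<in> V" "E x w" "E w y" using d2_common YV by blast
  then show ?thesis using EY EY' a Esym by blast
qed

end

locale bgii = bg +
  fixes n :: nat and f
  assumes n2: "n \<ge> 2"
  and fbij: "bij_betw f V (subdiv_V (Knn_V n) (Knn_E n))"
  and fE: "\<forall>x\<in>V. \<forall>y\<in>V. E x y \<longleftrightarrow> subdiv_E (Knn_E n) (f x) (f y)"
  and fYimg: "f ` Y = Inl ` Knn_V n"
begin

definition "idx p = projl (f p)"
definition "side p = (idx p < n)"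

lemma finj: "inj_on f V" using fbij by (simp add: bij_betw_def)
lemma fimg: "f ` V = subdiv_V (Knn_V n) (Knn_E n)" using fbij by (simp add: bij_betw_def)

lemma pt: "p \<in> Y \<Longrightarrow> f p = Inl (idx p) \<and> idx p < 2 * n"
proof -
  assume "p \<in> Y"
  then have "f p \<in> Inl ` Knn_V n" using fYimg by blast
  then obtain k where "f p = Inl k" "k < 2 * n" by (auto simp: Knn_V_def)
  then show ?thesis by (simp add: idx_def)
qed

lemma ptex: "k < 2 * n \<Longrightarrow> \<exists>p\<in>Y. idx p = k"
proof -
  assume "k < 2 * n"
  then have "Inl k \<in> f ` Y" using fYimg by (auto simp: Knn_V_def)
  then obtain p where "p \<in> Y" "f p = Inl k" by auto
  moreover from this have "idx p = k" by (simp add: idx_def)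
  ultimately show ?thesis by blast
qed

lemma idx_inj: "p \<in> Y \<Longrightarrow> q \<in> Y \<Longrightarrow> idx p = idx q \<Longrightarrow> p = q"
  using pt finj YV by (metis inj_onD)

lemma ln: "w \<in> Y' \<Longrightarrow> \<exists>u v. Knn_E n u v \<and> f w = Inr {u, v}"
proof -
  assume w: "w \<in> Y'"
  have "f w \<in> subdiv_V (Knn_V n) (Knn_E n)" using fimg Y'V[OF w] by blast
  then have "f w \<in> Inl ` Knn_V n \<or> (\<exists>u v. f w = Inr {u, v} \<and> Knn_E n u v)"
    by (auto simp: subdiv_V_def)
  moreover have "f w \<notin> Inl ` Knn_V n"
  proof
    assume "f w \<in> Inl ` Knn_V n"
    then obtain p where "p \<in> Y" "f p = f w" using fYimg by (metis imageE)
    then have "p = w" using finj YV Y'V[OF w] by (metis inj_onD)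
    then show False using \<open>p \<in> Y\<close> w YY by blast
  qed
  ultimately show ?thesis by blast
qed

lemma inc: "p \<in> Y \<Longrightarrow> w \<in> Y' \<Longrightarrow> Knn_E n u v \<Longrightarrow> f w = Inr {u, v} \<Longrightarrow> E p w \<longleftrightarrow> idx p \<in> {u, v}"
proof -
  assume a: "p \<in> Y" "w \<in> Y'" "Knn_E n u v" "f w = Inr {u, v}"
  have "E p w \<longleftrightarrow> subdiv_E (Knn_E n) (f p) (f w)" using fE YV[OF a(1)] Y'V[OF a(2)] by blast
  also have "\<dots> \<longleftrightarrow> idx p \<in> {u, v}" using pt[OF a(1)] a(4) subdiv_E_LR[OF a(3)] by simp
  finally show ?thesis .
qed

lemma knn_side: "Knn_E n u v \<Longrightarrow> (u < n) \<noteq> (v < n)" by (auto simp: Knn_E_def)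

lemma two_sides: "p \<in> Y \<Longrightarrow> q \<in> Y \<Longrightarrow> p \<noteq> q \<Longrightarrow> E p w \<Longrightarrow> E q w \<Longrightarrow> side p \<noteq> side q"
proof -
  assume a: "p \<in> Y" "q \<in> Y" "p \<noteq> q" "E p w" "E q w"
  have w: "w \<in> Y'" using EY a by blast
  obtain u v where uv: "Knn_E n u v" "f w = Inr {u, v}" using ln[OF w] by blast
  have "idx p \<in> {u, v}" "idx q \<in> {u, v}" using inc[OF _ w uv] a by blast+
  moreover have "idx p \<noteq> idx q" using idx_inj a by blast
  ultimately have "(idx p = u \<and> idx q = v) \<or> (idx p = v \<and> idx q = u)" by auto
  then show ?thesis using knn_side[OF uv(1)] by (auto simp: side_def)
qed

lemma common: "p \<in> Y \<Longrightarrow> q \<in> Y \<Longrightarrow> side p \<noteq> side q \<Longrightarrow> \<exists>w\<in>Y'. E p w \<and> E q w"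
proof -
  assume a: "p \<in> Y" "q \<in> Y" "side p \<noteq> side q"
  have k: "Knn_E n (idx p) (idx q)" using a pt[OF a(1)] pt[OF a(2)] by (auto simp: side_def Knn_E_def)
  then have "Inr {idx p, idx q} \<in> subdiv_V (Knn_V n) (Knn_E n)" by (auto simp: subdiv_V_def)
  then obtain w where w: "w \<in> V" "f w = Inr {idx p, idx q}" using fimg by (metis imageE)
  have "w \<notin> Y" using pt w by fastforce
  then have wY': "w \<in> Y'" using w VY by blast
  show ?thesis using inc[OF a(1) wY' k w(2)] inc[OF a(2) wY' k w(2)] wY' by blast
qed

lemma three: "p \<in> Y \<Longrightarrow> q \<in> Y \<Longrightarrow> r \<in> Y \<Longrightarrow> p \<noteq> q \<Longrightarrow> p \<noteq> r \<Longrightarrow> q \<noteq> r \<Longrightarrow>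
   E p w \<Longrightarrow> E q w \<Longrightarrow> E r w \<Longrightarrow> False"
  using two_sides by metis

lemma uniq2: "w1 \<in> Y' \<Longrightarrow> w2 \<in> Y' \<Longrightarrow> p \<in> Y \<Longrightarrow> q \<in> Y \<Longrightarrow> p \<noteq> q \<Longrightarrow> E p w1 \<Longrightarrow> E q w1
   \<Longrightarrow> E p w2 \<Longrightarrow> E q w2 \<Longrightarrow> w1 = w2"
proof -
  assume a: "w1 \<in> Y'" "w2 \<in> Y'" "p \<in> Y" "q \<in> Y" "p \<noteq> q" "E p w1" "E q w1" "E p w2" "E q w2"
  have ne: "idx p \<noteq> idx q" using idx_inj a by blast
  have fw: "f w = Inr {idx p, idx q}" if w: "w \<in> Y'" "E p w" "E q w" for w
  proof -
    obtain u v where uv: "Knn_E n u v" "f w = Inr {u, v}" using ln[OF w(1)] by blast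
    have "idx p \<in> {u, v}" "idx q \<in> {u, v}" using inc[OF _ w(1) uv] w a by blast+
    then have "{u, v} = {idx p, idx q}" using ne by auto
    then show ?thesis using uv by simp
  qed
  have "f w1 = f w2" using fw a by simp
  then show ?thesis using finj Y'V a by (metis inj_onD)
qed

lemma other_side: "x \<in> Y \<Longrightarrow> \<exists>q\<in>Y. side q \<noteq> side x"
proof -
  assume x: "x \<in> Y"
  define k where "k = (if side x then n else 0)"
  have "k < 2 * n" using n2 by (simp add: k_def)
  then obtain q where "q \<in> Y" "idx q = k" using ptex by blast
  moreover from this have "side q \<noteq> side x" using n2 by (auto simp: side_def k_def)
  ultimately show ?thesis by blast
qed

lemma same_side: "x \<in> Y \<Longrightarrow> \<exists>q\<in>Y. side q = side x \<and> q \<noteq> x"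
proof -
  assume x: "x \<in> Y"
  define k where "k = (if side x then (if idx x = 0 then 1 else 0) else (if idx x = n then n + 1 else n))"
  have "k < 2 * n" using n2 by (simp add: k_def)
  then obtain q where q: "q \<in> Y" "idx q = k" using ptex by blast
  have "side q = side x" using n2 pt[OF x] q by (auto simp: side_def k_def)
  moreover have "idx q \<noteq> idx x" using q by (auto simp: k_def)
  ultimately show ?thesis using q by blast
qed

lemma dle4: "x \<in> Y \<Longrightarrow> v \<in> V \<Longrightarrow> d x v \<le> 4"
proof -
  assume x: "x \<in> Y" and v: "v \<in> V"
  show ?thesis
  proof (cases "v \<in> Y")
    case vY: True
    show ?thesis
    proof (cases "v = x")
      case True then show ?thesis using d_self by simp
    next
      case vx: False
      show ?thesis
      proof (cases "side v = side x")
        case False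
        then obtain w where "E x w" "E v w" using common[OF x vY] by metis
        then have "d x v \<le> 2" using d2 YV[OF x] Esym by blast
        then show ?thesis by simp
      next
        case True
        obtain q where q: "q \<in> Y" "side q \<noteq> side x" using other_side x by blast
        obtain w1 where w1: "E x w1" "E q w1" using common[OF x q(1)] q(2) by metis
        obtain w2 where w2: "E q w2" "E v w2" using common[OF q(1) vY] q(2) True by metis
        show ?thesis using d4[OF w1(1) Esym[OF w1(2)] w2(1) Esym[OF w2(2)]] .
      qed
    qed
  next
    case False
    then have vY': "v \<in> Y'" using v VY by blast
    show ?thesis
    proof (cases "E x v")
      case True then show ?thesis using d1[OF YV[OF x] v] by simp
    next
      case False
      obtain u u' where uu: "Knn_E n u u'" "f v = Inr {u, u'}" using ln[OF vY'] by blast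
      have lt: "u < 2 * n" "u' < 2 * n" using uu by (auto simp: Knn_E_def)
      obtain r1 where r1: "r1 \<in> Y" "idx r1 = u" using ptex lt by blast
      obtain r2 where r2: "r2 \<in> Y" "idx r2 = u'" using ptex lt by blast
      have E: "E r1 v" "E r2 v" using inc[OF _ vY' uu] r1 r2 by auto
      have "side r1 \<noteq> side r2" using knn_side[OF uu(1)] r1 r2 by (simp add: side_def)
      then obtain r where r: "r \<in> Y" "E r v" "side r \<noteq> side x" using r1 r2 E by metis
      obtain wl where wl: "E x wl" "E r wl" using common[OF x r(1)] r(3) by metis
      have "d x v \<le> 3" using d3[OF wl(1) Esym[OF wl(2)] r(2)] .
      then show ?thesis by simp
    qed
  qed
qed

lemma ecc4': "x \<in> Y \<Longrightarrow> ecc V E x = 4"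
proof -
  assume x: "x \<in> Y"
  obtain w where w: "w \<in> V" "d x w = ecc V E x" using ecc_ex by blast
  have le: "ecc V E x \<le> 4" using dle4[OF x w(1)] w by simp
  obtain q where q: "q \<in> Y" "side q = side x" "q \<noteq> x" using same_side x by blast
  have qV: "q \<in> V" using YV q by blast
  have "even (d x q)" using d_par[OF YV[OF x] qV] x q by simp
  moreover have "d x q \<noteq> 0" using d0[OF YV[OF x] qV] q by simp
  moreover have "d x q \<noteq> 2"
  proof
    assume "d x q = 2"
    then obtain w where "E x w" "E q w" using pt_d2'[OF x qV] by blast
    then show False using two_sides[OF x q(1)] q by metis
  qed
  moreover have "d x q \<le> 4" using dle4[OF x qV] .
  ultimately have "d x q = 4" by (elim evenE) presburger
  then have "4 \<le> ecc V E x" using ecc_ge[OF qV, of x] by simp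
  then show ?thesis using le by simp
qed

lemma c2': "w \<in> Y' \<Longrightarrow> z \<in> sphere V E w 2 \<Longrightarrow> c_num V E 2 w z = 1"
proof -
  assume w: "w \<in> Y'" and z: "z \<in> sphere V E w 2"
  have wV: "w \<in> V" using Y'V w by blast
  have zV: "z \<in> V" and dz: "d w z = 2" using z by (auto simp: sphere_iff)
  have "even (d w z)" using dz by simp
  then have "z \<in> Y'" using d_par[OF wV zV] w YY zV VY by auto
  obtain r where r: "r \<in> V" "E w r" "E r z" using d2_common[OF wV zV dz] by blast
  have rY: "r \<in> Y" using EY' w r by blast
  have "sphere V E w 1 \<inter> nbhd V E z = {r}"
  proof (intro equalityI subsetI)
    fix r' assume "r' \<in> sphere V E w 1 \<inter> nbhd V E z"
    then have r': "E w r'" "E z r'" using sphere1[OF wV] by (auto simp: nbhd_iff)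
    have r'Y: "r' \<in> Y" using EY' w r' by blast
    show "r' \<in> {r}"
    proof (rule ccontr)
      assume "r' \<notin> {r}"
      then have "w = z" using uniq2[OF w \<open>z \<in> Y'\<close> rY r'Y, of] r r' Esym by blast
      then show False using dz d_self by simp
    qed
  next
    fix r' assume "r' \<in> {r}"
    then show "r' \<in> sphere V E w 1 \<inter> nbhd V E z" using r sphere1[OF wV] Esym by (auto simp: nbhd_iff)
  qed
  then show ?thesis by (simp add: c_num_def)
qed

lemma homog: "two_Y_homogeneous V E Y Y' 4"
proof -
  have "\<exists>g. \<forall>x\<in>Y. \<forall>y\<in>sphere V E x 2. \<forall>z\<in>sphere V E x i \<inter> sphere V E y i.
           card (nbhd V E x \<inter> nbhd V E y \<inter> sphere V E z (i - 1)) = g" if i: "1 \<le> i" "i \<le> 3" for i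
  proof -
    have "i = 1 \<or> i = 2 \<or> i = 3" using i by auto
    then show ?thesis
    proof (elim disjE)
      assume i1: "i = 1"
      show ?thesis
      proof (intro exI ballI)
        fix x y z assume x: "x \<in> Y" and y: "y \<in> sphere V E x 2" and z: "z \<in> sphere V E x i \<inter> sphere V E y i"
        have xV: "x \<in> V" using YV x by blast
        have yV: "y \<in> V" using y by (simp add: sphere_iff)
        have zV: "z \<in> V" using z by (simp add: sphere_iff)
        have "E x z" "E y z" using z i1 d1[OF xV zV] d1[OF yV zV] by (auto simp: sphere_iff)
        then have "nbhd V E x \<inter> nbhd V E y \<inter> sphere V E z (i - 1) = {z}"
          using sphere0[OF zV] i1 by (auto simp: nbhd_iff)
        then show "card (nbhd V E x \<inter> nbhd V E y \<inter> sphere V E z (i - 1)) = 1" by simp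
      qed
    next
      assume i2: "i = 2"
      show ?thesis
      proof (intro exI ballI)
        fix x y z assume x: "x \<in> Y" and y: "y \<in> sphere V E x 2" and z: "z \<in> sphere V E x i \<inter> sphere V E y i"
        have xV: "x \<in> V" using YV x by blast
        have yV: "y \<in> V" and dxy: "d x y = 2" using y by (auto simp: sphere_iff)
        have zV: "z \<in> V" and dxz: "d x z = 2" and dyz: "d y z = 2" using z i2 by (auto simp: sphere_iff)
        obtain yY: "y \<in> Y" and w1: "\<exists>w\<in>Y'. E x w \<and> E y w" using pt_d2'[OF x yV dxy] by blast
        obtain zY: "z \<in> Y" and w2: "\<exists>w\<in>Y'. E x w \<and> E z w" using pt_d2'[OF x zV dxz] by blast
        obtain w3: "\<exists>w\<in>Y'. E y w \<and> E z w" using pt_d2'[OF yY zV dyz] by blast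
        have "x \<noteq> y" using dxy d_self by auto
        moreover have "x \<noteq> z" using dxz d_self by auto
        moreover have "y \<noteq> z" using dyz d_self by auto
        ultimately have "side x \<noteq> side y" "side x \<noteq> side z" "side y \<noteq> side z"
          using two_sides x yY zY w1 w2 w3 by metis+
        then show "card (nbhd V E x \<inter> nbhd V E y \<inter> sphere V E z (i - 1)) = 0" by blast
      qed
    next
      assume i3: "i = 3"
      show ?thesis
      proof (intro exI ballI)
        fix x y z assume x: "x \<in> Y" and y: "y \<in> sphere V E x 2" and z: "z \<in> sphere V E x i \<inter> sphere V E y i"
        have xV: "x \<in> V" using YV x by blast
        have yV: "y \<in> V" and dxy: "d x y = 2" using y by (auto simp: sphere_iff)
        have zV: "z \<in> V" and dxz: "d x z = 3" and dyz: "d y z = 3" using z i3 by (auto simp: sphere_iff)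
        have yY: "y \<in> Y" using pt_d2'[OF x yV dxy] by blast
        have xy: "x \<noteq> y" using dxy d_self by auto
        have nxz: "\<not> E x z" using d1[OF xV zV] dxz by simp
        have nyz: "\<not> E y z" using d1[OF yV zV] dyz by simp
        have "nbhd V E x \<inter> nbhd V E y \<inter> sphere V E z (i - 1) = {}"
        proof (rule ccontr)
          assume "\<not> ?thesis"
          then obtain w where w: "E x w" "E y w" "w \<in> V" "d z w = 2" using i3 by (auto simp: nbhd_iff sphere_iff)
          obtain r where r: "r \<in> V" "E z r" "E r w" using d2_common[OF zV w(3,4)] by blast
          have wY': "w \<in> Y'" using EY x w by blast
          have rY: "r \<in> Y" using EY' wY' Esym[OF r(3)] by blast
          have "r \<noteq> x" using nxz r Esym by blast
          moreover have "r \<noteq> y" using nyz r Esym by blast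
          ultimately show False using three[OF x yY rY xy _ _ w(1,2) r(3)] by blast
        qed
        then show "card (nbhd V E x \<inter> nbhd V E y \<inter> sphere V E z (i - 1)) = 0" by simp
      qed
    qed
  qed
  then show ?thesis using bip ecc4' by (auto simp: two_Y_homogeneous_def)
qed

end

theorem theorem5p5:
  fixes V Y Y' :: "'a set" and E :: "'a \<Rightarrow> 'a \<Rightarrow> bool" and D :: nat
  assumes "dist_regularized_graph V E"
    and "bipartite_YY V E Y Y'"
    and "Y \<noteq> {}" and "Y' \<noteq> {}"
    and "\<forall>x\<in>Y. ecc V E x = D"
  shows "(two_Y_homogeneous V E Y Y' D \<and> D = 4 \<and>
            (\<forall>w\<in>Y'. \<forall>z\<in>sphere V E w 2. c_num V E 2 w z = 1))
         \<longleftrightarrow>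
         (\<exists>n::nat. n \<ge> 2 \<and> (\<exists>f. bij_betw f V (subdiv_V (Knn_V n) (Knn_E n)) \<and>
              (\<forall>x\<in>V. \<forall>y\<in>V. E x y \<longleftrightarrow> subdiv_E (Knn_E n) (f x) (f y)) \<and>
              f ` Y = Inl ` Knn_V n))"
proof -
  have cg: "connected_graph V E" and DR: "\<forall>u\<in>V. dist_regularized_vertex V E u"
    using assms(1) by (auto simp: dist_regularized_graph_def)
  interpret bg V E Y Y' using cg assms(2) by unfold_locales
  show ?thesis
  proof
    assume H: "two_Y_homogeneous V E Y Y' D \<and> D = 4 \<and>
            (\<forall>w\<in>Y'. \<forall>z\<in>sphere V E w 2. c_num V E 2 w z = 1)"
    then have D4: "D = 4" by blast
    have HH: "\<forall>i. 1 \<le> i \<and> i \<le> D - 1 \<longrightarrow>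
        (\<exists>g. \<forall>x\<in>Y. \<forall>y\<in>sphere V E x 2. \<forall>z\<in>sphere V E x i \<inter> sphere V E y i.
           card (nbhd V E x \<inter> nbhd V E y \<inter> sphere V E z (i - 1)) = g)"
      using H by (simp add: two_Y_homogeneous_def)
    have e2: "(2::nat) - 1 = 1" and e3: "(3::nat) - 1 = 2" by simp_all
    have G2: "\<exists>g. \<forall>x\<in>Y. \<forall>y\<in>sphere V E x 2. \<forall>z\<in>sphere V E x 2 \<inter> sphere V E y 2.
           card (nbhd V E x \<inter> nbhd V E y \<inter> sphere V E z 1) = g"
      using HH[rule_format, of 2, unfolded e2] D4 by simp
    have G3: "\<exists>g. \<forall>x\<in>Y. \<forall>y\<in>sphere V E x 2. \<forall>z\<in>sphere V E x 3 \<inter> sphere V E y 3.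
           card (nbhd V E x \<inter> nbhd V E y \<inter> sphere V E z 2) = g"
      using HH[rule_format, of 3, unfolded e3] D4 by simp
    interpret bgi V E Y Y'
      using DR assms(3,5) D4 G2 G3 H by unfold_locales auto
    obtain x0 where "x0 \<in> Y" using assms(3) by blast
    then interpret bgi0 V E Y Y' x0 by unfold_locales
    show "\<exists>n::nat. n \<ge> 2 \<and> (\<exists>f. bij_betw f V (subdiv_V (Knn_V n) (Knn_E n)) \<and>
              (\<forall>x\<in>V. \<forall>y\<in>V. E x y \<longleftrightarrow> subdiv_E (Knn_E n) (f x) (f y)) \<and>
              f ` Y = Inl ` Knn_V n)" by (rule constr)
  next
    assume "\<exists>n::nat. n \<ge> 2 \<and> (\<exists>f. bij_betw f V (subdiv_V (Knn_V n) (Knn_E n)) \<and>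
              (\<forall>x\<in>V. \<forall>y\<in>V. E x y \<longleftrightarrow> subdiv_E (Knn_E n) (f x) (f y)) \<and>
              f ` Y = Inl ` Knn_V n)"
    then obtain n f where nf: "n \<ge> 2" "bij_betw f V (subdiv_V (Knn_V n) (Knn_E n))"
      "\<forall>x\<in>V. \<forall>y\<in>V. E x y \<longleftrightarrow> subdiv_E (Knn_E n) (f x) (f y)" "f ` Y = Inl ` Knn_V n"
      by blast
    interpret bgii V E Y Y' n f using nf by unfold_locales
    obtain x where x: "x \<in> Y" using assms(3) by blast
    have D4: "D = 4" using ecc4'[OF x] assms(5) x by simp
    show "two_Y_homogeneous V E Y Y' D \<and> D = 4 \<and>
            (\<forall>w\<in>Y'. \<forall>z\<in>sphere V E w 2. c_num V E 2 w z = 1)"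
      using homog D4 c2' by blast
  qed
qed

end
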